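(* Let $S^0$ be an adequate transversal of a quasi-adequate semigroup $S$. Then $I$ is a left regular subband and $\Lambda$ a right regular subband of $S$, and $E^0$ is a semilattice transversal of both $I$ and $\Lambda$, with $x^0\in V(x)\cap E^0$ for all $x\in I\cup\Lambda$. Moreover, if $x\in E^0$ then $x^0=x$.
   Context: For a semigroup $S$, $S^1$ is $S$ with an identity adjoined, $E(S)$ its idempotents, $V(x)$ the set of inverses of $x$, $\mathcal{L},\mathcal{R}$ Green's relations. $\mathcal{R}^\ast=\{(a,b):\forall x,y\in S^1,\ xa=ya\iff xb=yb\}$, $\mathcal{L}^\ast=\{(a,b):\forall x,y\in S^1,\ ax=ay\iff bx=by\}$. $S$ is abundant if each $\mathcal{R}^\ast$- and $\mathcal{L}^\ast$-class contains an idempotent; adequate if also idempotents commute (then $a^+$, $a^\ast$ are the unique idempotents $\mathcal{R}^\ast$-, resp. $\mathcal{L}^\ast$-related to $a$). Quasi-adequate: abundant with $E(S)$ a subsemigroup. An abundant subsemigroup $U$ of abundant $S$ is a $\ast$-subsemigroup if $\mathcal{L}^\ast(U)=\mathcal{L}^\ast(S)\cap(U\times U)$, $\mathcal{R}^\ast(U)=\mathcal{R}^\ast(S)\cap(U\times U)$. An adequate $\ast$-subsemigroup $S^0$ of abundant $S$ is an adequate transversal if each $x\in S$ has a unique $\overline{x}\in S^0$ and idempotents $e,f$ of $S$ (then unique, written $e_x,f_x$) with $x=e\overline{x}f$, $e\,\mathcal{L}\,\overline{x}^+$, $f\,\mathcal{R}\,\overline{x}^\ast$. $E^0=E(S^0)$,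 $I=\{e_x:x\in S\}$, $\Lambda=\{f_x:x\in S\}$. For regular $x\in S$, $x^0$ is the unique inverse of $x$ with $xx^0=e_x$ and $x^0x=f_x$. A left (right) regular band satisfies $xyx=xy$ ($xyx=yx$). $E^0$ is a semilattice transversal of a band $B$ if $E^0$ is a subsemilattice of $B$ and $|V(x)\cap E^0|=1$ for all $x\in B$. *)

theory Defs
  imports Main
begin

text \<open>Semigroups are subsets S of a type of class semigroup_mult closed under
  multiplication. Elements of S^1 are encoded as options: None is the adjoined identity.\<close>

definition closed :: "'a::semigroup_mult set \<Rightarrow> bool" where
  "closed A \<longleftrightarrow> (\<forall>a\<in>A. \<forall>b\<in>A. a * b \<in> A)"

definition one_adj :: "'a set \<Rightarrow> 'a option set" where
  "one_adj A = insert None (Some ` A)"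

fun lmul :: "'a::semigroup_mult option \<Rightarrow> 'a \<Rightarrow> 'a" where
  "lmul None a = a"
| "lmul (Some x) a = x * a"

fun rmul :: "'a::semigroup_mult \<Rightarrow> 'a option \<Rightarrow> 'a" where
  "rmul a None = a"
| "rmul a (Some x) = a * x"

definition idems :: "'a::semigroup_mult set \<Rightarrow> 'a set" where
  "idems A = {e\<in>A. e * e = e}"

definition greenL :: "'a::semigroup_mult set \<Rightarrow> 'a \<Rightarrow> 'a \<Rightarrow> bool" where
  "greenL A a b \<longleftrightarrow> a \<in> A \<and> b \<in> A \<and>
     (\<exists>u\<in>one_adj A. lmul u a = b) \<and> (\<exists>v\<in>one_adj A. lmul v b = a)"

definition greenR :: "'a::semigroup_mult set \<Rightarrow> 'a \<Rightarrow> 'a \<Rightarrow> bool" where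
  "greenR A a b \<longleftrightarrow> a \<in> A \<and> b \<in> A \<and>
     (\<exists>u\<in>one_adj A. rmul a u = b) \<and> (\<exists>v\<in>one_adj A. rmul b v = a)"

definition Rstar :: "'a::semigroup_mult set \<Rightarrow> 'a \<Rightarrow> 'a \<Rightarrow> bool" where
  "Rstar A a b \<longleftrightarrow> a \<in> A \<and> b \<in> A \<and>
     (\<forall>x\<in>one_adj A. \<forall>y\<in>one_adj A. lmul x a = lmul y a \<longleftrightarrow> lmul x b = lmul y b)"

definition Lstar :: "'a::semigroup_mult set \<Rightarrow> 'a \<Rightarrow> 'a \<Rightarrow> bool" where
  "Lstar A a b \<longleftrightarrow> a \<in> A \<and> b \<in> A \<and>
     (\<forall>x\<in>one_adj A. \<forall>y\<in>one_adj A. rmul a x = rmul a y \<longleftrightarrow> rmul b x = rmul b y)"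

definition abundant :: "'a::semigroup_mult set \<Rightarrow> bool" where
  "abundant A \<longleftrightarrow> closed A \<and>
     (\<forall>a\<in>A. (\<exists>e\<in>idems A. Rstar A a e) \<and> (\<exists>f\<in>idems A. Lstar A a f))"

definition adequate :: "'a::semigroup_mult set \<Rightarrow> bool" where
  "adequate A \<longleftrightarrow> abundant A \<and> (\<forall>e\<in>idems A. \<forall>f\<in>idems A. e * f = f * e)"

definition quasi_adequate :: "'a::semigroup_mult set \<Rightarrow> bool" where
  "quasi_adequate A \<longleftrightarrow> abundant A \<and> closed (idems A)"

definition star_subsemigroup :: "'a::semigroup_mult set \<Rightarrow> 'a set \<Rightarrow> bool" where
  "star_subsemigroup U A \<longleftrightarrow> U \<subseteq> A \<and> abundant U \<and>
     (\<forall>a\<in>U. \<forall>b\<in>U. Lstar U a b \<longleftrightarrow> Lstar A a b) \<and>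
     (\<forall>a\<in>U. \<forall>b\<in>U. Rstar U a b \<longleftrightarrow> Rstar A a b)"

definition plus :: "'a::semigroup_mult set \<Rightarrow> 'a \<Rightarrow> 'a" where
  "plus A a = (THE e. e \<in> idems A \<and> Rstar A a e)"

definition star :: "'a::semigroup_mult set \<Rightarrow> 'a \<Rightarrow> 'a" where
  "star A a = (THE f. f \<in> idems A \<and> Lstar A a f)"

definition fact :: "'a::semigroup_mult set \<Rightarrow> 'a set \<Rightarrow> 'a \<Rightarrow> 'a \<times> 'a \<times> 'a \<Rightarrow> bool" where
  "fact S0 S x t \<longleftrightarrow> (case t of (xb, e, f) \<Rightarrow>
     xb \<in> S0 \<and> e \<in> idems S \<and> f \<in> idems S \<and> x = e * xb * f \<and>
     greenL S e (plus S0 xb) \<and> greenR S f (star S0 xb))"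

definition adequate_transversal :: "'a::semigroup_mult set \<Rightarrow> 'a set \<Rightarrow> bool" where
  "adequate_transversal S0 S \<longleftrightarrow> adequate S0 \<and> star_subsemigroup S0 S \<and>
     (\<forall>x\<in>S. \<exists>!t. fact S0 S x t)"

definition bar :: "'a::semigroup_mult set \<Rightarrow> 'a set \<Rightarrow> 'a \<Rightarrow> 'a" where
  "bar S0 S x = fst (THE t. fact S0 S x t)"

definition ex :: "'a::semigroup_mult set \<Rightarrow> 'a set \<Rightarrow> 'a \<Rightarrow> 'a" where
  "ex S0 S x = fst (snd (THE t. fact S0 S x t))"

definition fx :: "'a::semigroup_mult set \<Rightarrow> 'a set \<Rightarrow> 'a \<Rightarrow> 'a" where
  "fx S0 S x = snd (snd (THE t. fact S0 S x t))"

definition Iset :: "'a::semigroup_mult set \<Rightarrow> 'a set \<Rightarrow> 'a set" where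
  "Iset S0 S = ex S0 S ` S"

definition Lambda :: "'a::semigroup_mult set \<Rightarrow> 'a set \<Rightarrow> 'a set" where
  "Lambda S0 S = fx S0 S ` S"

definition inverses :: "'a::semigroup_mult set \<Rightarrow> 'a \<Rightarrow> 'a set" where
  "inverses S x = {y\<in>S. x * y * x = x \<and> y * x * y = y}"

definition zero_inv :: "'a::semigroup_mult set \<Rightarrow> 'a set \<Rightarrow> 'a \<Rightarrow> 'a" where
  "zero_inv S0 S x = (THE y. y \<in> inverses S x \<and> x * y = ex S0 S x \<and> y * x = fx S0 S x)"

definition band :: "'a::semigroup_mult set \<Rightarrow> 'a set \<Rightarrow> bool" where
  "band S B \<longleftrightarrow> B \<subseteq> S \<and> closed B \<and> (\<forall>x\<in>B. x * x = x)"

definition left_regular_band :: "'a::semigroup_mult set \<Rightarrow> 'a set \<Rightarrow> bool" where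
  "left_regular_band S B \<longleftrightarrow> band S B \<and> (\<forall>x\<in>B. \<forall>y\<in>B. x * y * x = x * y)"

definition right_regular_band :: "'a::semigroup_mult set \<Rightarrow> 'a set \<Rightarrow> bool" where
  "right_regular_band S B \<longleftrightarrow> band S B \<and> (\<forall>x\<in>B. \<forall>y\<in>B. x * y * x = y * x)"

definition semilattice_transversal :: "'a::semigroup_mult set \<Rightarrow> 'a set \<Rightarrow> 'a set \<Rightarrow> bool" where
  "semilattice_transversal S E0 B \<longleftrightarrow> E0 \<subseteq> B \<and> closed E0 \<and>
     (\<forall>e\<in>E0. e * e = e) \<and> (\<forall>e\<in>E0. \<forall>f\<in>E0. e * f = f * e) \<and>
     (\<forall>x\<in>B. card (inverses S x \<inter> E0) = 1)"

end

theory Submission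
  imports Defs
begin

lemma Rstar_cancel: "Rstar A a e \<Longrightarrow> u \<in> A \<Longrightarrow> v \<in> A \<Longrightarrow> u * a = v * a \<Longrightarrow> u * e = v * e"
  unfolding Rstar_def one_adj_def by (metis image_eqI insertI2 lmul.simps(2))
lemma Rstar_cancel1: "Rstar A a e \<Longrightarrow> u \<in> A \<Longrightarrow> u * a = a \<Longrightarrow> u * e = e"
  unfolding Rstar_def one_adj_def by (metis image_eqI insertI1 insertI2 lmul.simps)
lemma Rstar_idem: "Rstar A a e \<Longrightarrow> e \<in> A \<Longrightarrow> e * e = e \<Longrightarrow> e * a = a"
  unfolding Rstar_def one_adj_def by (metis image_eqI insertI1 insertI2 lmul.simps)
lemma Lstar_cancel: "Lstar A a e \<Longrightarrow> u \<in> A \<Longrightarrow> v \<in> A \<Longrightarrow> a * u = a * v \<Longrightarrow> e * u = e * v"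
  unfolding Lstar_def one_adj_def by (metis image_eqI insertI2 rmul.simps(2))
lemma Lstar_cancel1: "Lstar A a e \<Longrightarrow> u \<in> A \<Longrightarrow> a * u = a \<Longrightarrow> e * u = e"
  unfolding Lstar_def one_adj_def by (metis image_eqI insertI1 insertI2 rmul.simps)
lemma Lstar_idem: "Lstar A a e \<Longrightarrow> e \<in> A \<Longrightarrow> e * e = e \<Longrightarrow> a * e = a"
  unfolding Lstar_def one_adj_def by (metis image_eqI insertI1 insertI2 rmul.simps)

lemma greenL_D: "greenL A e p \<Longrightarrow> e * e = e \<Longrightarrow> p * p = p \<Longrightarrow> e * p = e \<and> p * e = p"
  unfolding greenL_def one_adj_def
  by (auto simp: mult.assoc) (metis mult.assoc)+
lemma greenR_D: "greenR A f q \<Longrightarrow> f * f = f \<Longrightarrow> q * q = q \<Longrightarrow> f * q = q \<and> q * f = f"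
  unfolding greenR_def one_adj_def
  by (auto simp: mult.assoc) (metis mult.assoc)+
lemma greenL_I: "e \<in> A \<Longrightarrow> p \<in> A \<Longrightarrow> e * p = e \<Longrightarrow> p * e = p \<Longrightarrow> greenL A e p"
  unfolding greenL_def one_adj_def by (metis image_eqI insertI2 lmul.simps(2))
lemma greenR_I: "f \<in> A \<Longrightarrow> q \<in> A \<Longrightarrow> f * q = q \<Longrightarrow> q * f = f \<Longrightarrow> greenR A f q"
  unfolding greenR_def one_adj_def by (metis image_eqI insertI2 rmul.simps(2))


locale AT =
  fixes S S0 :: "'a::semigroup_mult set"
  assumes clS: "closed S" and qa: "quasi_adequate S" and at: "adequate_transversal S0 S"
begin

lemma S0_sub: "S0 \<subseteq> S"
  using at unfolding adequate_transversal_def star_subsemigroup_def by blast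
lemma clS0: "closed S0"
  using at unfolding adequate_transversal_def adequate_def abundant_def by blast
lemma clE: "closed (idems S)" using qa unfolding quasi_adequate_def by blast
lemma comm: "e \<in> idems S0 \<Longrightarrow> f \<in> idems S0 \<Longrightarrow> e * f = f * e"
  using at unfolding adequate_transversal_def adequate_def by blast
lemma mulS: "x \<in> S \<Longrightarrow> y \<in> S \<Longrightarrow> x * y \<in> S" using clS unfolding closed_def by blast
lemma mulE: "x \<in> idems S \<Longrightarrow> y \<in> idems S \<Longrightarrow> x * y \<in> idems S" using clE unfolding closed_def by blast
lemma E0E: "x \<in> idems S0 \<Longrightarrow> x \<in> idems S" using S0_sub unfolding idems_def by blast
lemma E0S: "x \<in> idems S0 \<Longrightarrow> x \<in> S" using S0_sub unfolding idems_def by blast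
lemma ES: "x \<in> idems S \<Longrightarrow> x \<in> S" unfolding idems_def by blast
lemma Eid: "x \<in> idems A \<Longrightarrow> x * x = x" unfolding idems_def by blast
lemma mulE0: "x \<in> idems S0 \<Longrightarrow> y \<in> idems S0 \<Longrightarrow> x * y \<in> idems S0"
proof -
  assume x: "x \<in> idems S0" and y: "y \<in> idems S0"
  have "x * y \<in> S0" using clS0 x y unfolding closed_def idems_def by blast
  moreover have "x * y * (x * y) = x * y"
  proof -
    have "x * y * (x * y) = x * (y * x) * y" by (simp add: mult.assoc)
    also have "\<dots> = x * (x * y) * y" using comm[OF x y] by simp
    also have "\<dots> = x * y" using Eid[OF x] Eid[OF y] by (metis mult.assoc)
    finally show ?thesis .
  qed
  ultimately show ?thesis unfolding idems_def by blast
qed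

lemma RS: "a \<in> S0 \<Longrightarrow> b \<in> S0 \<Longrightarrow> Rstar S0 a b \<Longrightarrow> Rstar S a b"
  using at unfolding adequate_transversal_def star_subsemigroup_def by blast
lemma LS: "a \<in> S0 \<Longrightarrow> b \<in> S0 \<Longrightarrow> Lstar S0 a b \<Longrightarrow> Lstar S a b"
  using at unfolding adequate_transversal_def star_subsemigroup_def by blast

lemma plus_eq: assumes a: "a \<in> S0" and e: "e \<in> idems S0" and R: "Rstar S0 a e"
  shows "plus S0 a = e"
  unfolding plus_def
proof (rule the_equality)
  show "e \<in> idems S0 \<and> Rstar S0 a e" using e R by blast
next
  fix e' assume "e' \<in> idems S0 \<and> Rstar S0 a e'"
  then have e': "e' \<in> idems S0" and R': "Rstar S0 a e'" by auto
  have eS: "e \<in> S0" "e' \<in> S0" using e e' unfolding idems_def by auto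
  have "e' * a = a" using Rstar_idem[OF R'] e' unfolding idems_def by blast
  then have 1: "e' * e = e" using Rstar_cancel1[OF R] eS by blast
  have "e * a = a" using Rstar_idem[OF R] e unfolding idems_def by blast
  then have 2: "e * e' = e'" using Rstar_cancel1[OF R'] eS by blast
  show "e' = e" using 1 2 comm[OF e e'] by simp
qed

lemma star_eq: assumes a: "a \<in> S0" and e: "e \<in> idems S0" and R: "Lstar S0 a e"
  shows "star S0 a = e"
  unfolding star_def
proof (rule the_equality)
  show "e \<in> idems S0 \<and> Lstar S0 a e" using e R by blast
next
  fix e' assume "e' \<in> idems S0 \<and> Lstar S0 a e'"
  then have e': "e' \<in> idems S0" and R': "Lstar S0 a e'" by auto
  have eS: "e \<in> S0" "e' \<in> S0" using e e' unfolding idems_def by auto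
  have "a * e' = a" using Lstar_idem[OF R'] e' unfolding idems_def by blast
  then have 1: "e * e' = e" using Lstar_cancel1[OF R] eS by blast
  have "a * e = a" using Lstar_idem[OF R] e unfolding idems_def by blast
  then have 2: "e' * e = e'" using Lstar_cancel1[OF R'] eS by blast
  show "e' = e" using 1 2 comm[OF e e'] by simp
qed

lemma plus_prop: assumes a: "a \<in> S0" shows "plus S0 a \<in> idems S0 \<and> Rstar S0 a (plus S0 a)"
proof -
  obtain e where "e \<in> idems S0" "Rstar S0 a e"
    using at a unfolding adequate_transversal_def adequate_def abundant_def by blast
  then show ?thesis using plus_eq[OF a] by simp
qed

lemma star_prop: assumes a: "a \<in> S0" shows "star S0 a \<in> idems S0 \<and> Lstar S0 a (star S0 a)"
proof -
  obtain e where "e \<in> idems S0" "Lstar S0 a e"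
    using at a unfolding adequate_transversal_def adequate_def abundant_def by blast
  then show ?thesis using star_eq[OF a] by simp
qed

lemma plus_idem: "e \<in> idems S0 \<Longrightarrow> plus S0 e = e"
  by (rule plus_eq) (auto simp: idems_def Rstar_def)
lemma star_idem: "e \<in> idems S0 \<Longrightarrow> star S0 e = e"
  by (rule star_eq) (auto simp: idems_def Lstar_def)

lemma uniq: "x \<in> S \<Longrightarrow> \<exists>!t. fact S0 S x t"
  using at unfolding adequate_transversal_def by blast

lemma fact_the: assumes "x \<in> S" shows "fact S0 S x (bar S0 S x, ex S0 S x, fx S0 S x)"
proof -
  have "fact S0 S x (THE t. fact S0 S x t)" using theI'[OF uniq[OF assms]] .
  then show ?thesis unfolding bar_def ex_def fx_def by simp
qed

lemma fact_uniq: "x \<in> S \<Longrightarrow> fact S0 S x t1 \<Longrightarrow> fact S0 S x t2 \<Longrightarrow> t1 = t2"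
  using uniq by blast


lemma idem_bar:
  assumes g: "g \<in> idems S"
  obtains a e' f' where "a \<in> idems S0" "e' \<in> idems S" "f' \<in> idems S" "g = e' * a * f'"
    "e' * a = e'" "a * e' = a" "f' * a = a" "a * f' = f'" "g * e' = e'" "f' * g = f'"
proof -
  have gS: "g \<in> S" and gg: "g * g = g" using g by (auto simp: idems_def)
  define a where "a = bar S0 S g"
  define e' where "e' = ex S0 S g"
  define f' where "f' = fx S0 S g"
  define p where "p = plus S0 a"
  define q where "q = star S0 a"
  have F: "fact S0 S g (a, e', f')" using fact_the[OF gS] by (simp add: a_def e'_def f'_def)
  then have aS0: "a \<in> S0" and e'E: "e' \<in> idems S" and f'E: "f' \<in> idems S"
    and geq: "g = e' * a * f'" and gL: "greenL S e' p" and gR: "greenR S f' q"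
    by (simp_all add: fact_def p_def q_def)
  have pE: "p \<in> idems S0" and pR: "Rstar S0 a p" using plus_prop[OF aS0] p_def by auto
  have qE: "q \<in> idems S0" and qL: "Lstar S0 a q" using star_prop[OF aS0] q_def by auto
  have pS0: "p \<in> S0" and qS0: "q \<in> S0" using pE qE by (auto simp: idems_def)
  have pRS: "Rstar S a p" using RS[OF aS0 pS0 pR] .
  have qLS: "Lstar S a q" using LS[OF aS0 qS0 qL] .
  have aS: "a \<in> S" and pS: "p \<in> S" and qS: "q \<in> S" and e'S: "e' \<in> S" and f'S: "f' \<in> S"
    using aS0 pS0 qS0 S0_sub e'E f'E by (auto simp: idems_def)
  have e'p: "e' * p = e'" "p * e' = p" using greenL_D[OF gL Eid[OF e'E] Eid[OF pE]] by auto
  have f'q: "f' * q = q" "q * f' = f'" using greenR_D[OF gR Eid[OF f'E] Eid[OF qE]] by auto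
  have pa: "p * a = a" using Rstar_idem[OF pRS pS Eid[OF pE]] .
  have aq: "a * q = a" using Lstar_idem[OF qLS qS Eid[OF qE]] .
  have pg: "p * g = a * f'" using geq e'p pa by (metis mult.assoc)
  have s1: "a * f' * (e' * a * f') = a * f'"
  proof -
    have "p * g * g = p * g" using gg by (simp add: mult.assoc)
    then show ?thesis using pg geq by simp
  qed
  have s2: "a * (f' * e' * a) = a"
  proof -
    have "a * f' * (e' * a * f') * q = a * f' * q" using s1 by simp
    then show ?thesis using f'q aq by (simp add: mult.assoc)
  qed
  have s3: "f' * e' * a = q"
  proof -
    have "a * (f' * e' * a) = a * q" using s2 aq by simp
    moreover have "f' * e' * a \<in> S" using mulS aS e'S f'S by blast
    ultimately have "q * (f' * e' * a) = q * q" using Lstar_cancel[OF qLS _ qS] by blast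
    then show ?thesis using f'q Eid[OF qE] by (metis mult.assoc)
  qed
  have s4: "a * f' * e' = p"
  proof -
    have "(a * f' * e') * a = p * a" using s2 pa by (simp add: mult.assoc)
    moreover have "a * f' * e' \<in> S" using mulS aS e'S f'S by blast
    ultimately have "(a * f' * e') * p = p * p" using Rstar_cancel[OF pRS _ pS] by blast
    then show ?thesis using e'p Eid[OF pE] by (simp add: mult.assoc)
  qed
  have hE: "f' * e' * (f' * e') = f' * e'" using Eid[OF mulE[OF f'E e'E]] .
  have pq: "p * q = a"
  proof -
    have "p * q = (a * f' * e') * (f' * e' * a)" using s3 s4 by simp
    also have "\<dots> = a * (f' * e' * (f' * e')) * a" by (simp add: mult.assoc)
    also have "\<dots> = a * (f' * e' * a)" using hE by (simp add: mult.assoc)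
    finally show ?thesis using s2 by simp
  qed
  have aE: "a \<in> idems S0" using mulE0[OF pE qE] pq by simp
  have ap: "a * p = p"
    using Rstar_cancel1[OF pRS aS] Eid[OF aE] by blast
  have "a = p" using pa ap comm[OF pE aE] by simp
  have qa: "q * a = q"
    using Lstar_cancel1[OF qLS aS] Eid[OF aE] by blast
  have "a = q" using aq qa comm[OF qE aE] by simp
  have r1: "e' * a = e'" "a * e' = a" using e'p \<open>a = p\<close> by auto
  have r2: "f' * a = a" "a * f' = f'" using f'q \<open>a = q\<close> by auto
  have ga: "g * a = e'" using geq r1 r2 Eid[OF aE] by (metis mult.assoc)
  have ag: "a * g = f'" using geq r1 r2 Eid[OF aE] by (metis mult.assoc)
  have "g * e' = e'" using ga gg by (metis mult.assoc)
  moreover have "f' * g = f'" using ag gg by (metis mult.assoc)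
  ultimately show ?thesis using that aE e'E f'E geq r1 r2 by blast
qed


lemma IsetI: assumes e: "e \<in> idems S" and e0: "e0 \<in> idems S0" and "e * e0 = e" "e0 * e = e0"
  shows "e \<in> Iset S0 S" "ex S0 S e = e" "fx S0 S e = e0" "bar S0 S e = e0"
proof -
  have eS: "e \<in> S" using ES[OF e] .
  have "fact S0 S e (e0, e, e0)"
    unfolding fact_def using assms plus_idem[OF e0] star_idem[OF e0] E0S[OF e0] eS Eid[OF e0]
    by (auto simp: idems_def intro!: greenL_I greenR_I)
  then have "(e0, e, e0) = (bar S0 S e, ex S0 S e, fx S0 S e)" using fact_uniq[OF eS] fact_the[OF eS] by blast
  then show "ex S0 S e = e" "fx S0 S e = e0" "bar S0 S e = e0" by auto
  then show "e \<in> Iset S0 S" unfolding Iset_def using eS by force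
qed

lemma LamI: assumes e: "e \<in> idems S" and e0: "e0 \<in> idems S0" and "e0 * e = e" "e * e0 = e0"
  shows "e \<in> Lambda S0 S" "ex S0 S e = e0" "fx S0 S e = e" "bar S0 S e = e0"
proof -
  have eS: "e \<in> S" using ES[OF e] .
  have "fact S0 S e (e0, e0, e)"
    unfolding fact_def using assms plus_idem[OF e0] star_idem[OF e0] E0S[OF e0] eS Eid[OF e0]
    by (auto simp: idems_def intro!: greenL_I greenR_I)
  then have "(e0, e0, e) = (bar S0 S e, ex S0 S e, fx S0 S e)" using fact_uniq[OF eS] fact_the[OF eS] by blast
  then show "ex S0 S e = e0" "fx S0 S e = e" "bar S0 S e = e0" by auto
  then show "e \<in> Lambda S0 S" unfolding Lambda_def using eS by force
qed

lemma IsetD: assumes "e \<in> Iset S0 S"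
  shows "e \<in> idems S \<and> (\<exists>e0\<in>idems S0. e * e0 = e \<and> e0 * e = e0)"
proof -
  obtain x where x: "x \<in> S" and ee: "e = ex S0 S x" using assms unfolding Iset_def by blast
  have F: "fact S0 S x (bar S0 S x, ex S0 S x, fx S0 S x)" using fact_the[OF x] .
  then have b: "bar S0 S x \<in> S0" and eE: "e \<in> idems S" and gL: "greenL S e (plus S0 (bar S0 S x))"
    using ee by (auto simp: fact_def)
  have pE: "plus S0 (bar S0 S x) \<in> idems S0" using plus_prop[OF b] by blast
  show ?thesis using greenL_D[OF gL Eid[OF eE] Eid[OF pE]] pE eE by blast
qed

lemma LamD: assumes "e \<in> Lambda S0 S"
  shows "e \<in> idems S \<and> (\<exists>e0\<in>idems S0. e0 * e = e \<and> e * e0 = e0)"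
proof -
  obtain x where x: "x \<in> S" and ee: "e = fx S0 S x" using assms unfolding Lambda_def by blast
  have F: "fact S0 S x (bar S0 S x, ex S0 S x, fx S0 S x)" using fact_the[OF x] .
  then have b: "bar S0 S x \<in> S0" and eE: "e \<in> idems S" and gR: "greenR S e (star S0 (bar S0 S x))"
    using ee by (auto simp: fact_def)
  have pE: "star S0 (bar S0 S x) \<in> idems S0" using star_prop[OF b] by blast
  show ?thesis using greenR_D[OF gR Eid[OF eE] Eid[OF pE]] pE eE by blast
qed


lemma keyL: assumes e0: "e0 \<in> idems S0" and f: "f \<in> idems S" and f0: "f0 \<in> idems S0"
  and ff0: "f * f0 = f" and f0f: "f0 * f = f0"
  shows "e0 * f * (e0 * f0) = e0 * f"
proof -
  define k where "k = e0 * f"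
  define c where "c = e0 * f0"
  have kE: "k \<in> idems S" unfolding k_def using mulE[OF E0E[OF e0] f] .
  obtain a e' f' where aE: "a \<in> idems S0" and e'E: "e' \<in> idems S" and f'E: "f' \<in> idems S"
    and keq: "k = e' * a * f'" and r: "e' * a = e'" "a * e' = a" "f' * a = a" "a * f' = f'"
    and ke': "k * e' = e'" and f'k: "f' * k = f'"
    using idem_bar[OF kE] by blast
  have ee0: "e0 * e0 = e0" using Eid[OF e0] .
  have cm: "e0 * f0 = f0 * e0" using comm[OF e0 f0] .
  have e0k: "e0 * k = k" unfolding k_def by (simp add: mult.assoc[symmetric] ee0)
  have kf0: "k * f0 = k" unfolding k_def by (simp add: mult.assoc ff0)
  have f0k: "f0 * k = c"
  proof -
    have "f0 * k = (f0 * e0) * f" unfolding k_def by (simp add: mult.assoc)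
    also have "\<dots> = e0 * (f0 * f)" using cm by (simp add: mult.assoc[symmetric])
    finally show ?thesis using f0f c_def by simp
  qed
  have ck: "c * k = c"
  proof -
    have "c * k = e0 * (f0 * k)" unfolding c_def by (simp add: mult.assoc)
    also have "\<dots> = (e0 * e0) * f0" using f0k c_def by (simp add: mult.assoc)
    finally show ?thesis using ee0 c_def by simp
  qed
  have e0e': "e0 * e' = e'"
  proof -
    have "e0 * e' = (e0 * k) * e'" using ke' by (simp add: mult.assoc)
    then show ?thesis using e0k ke' by simp
  qed
  have f'f0: "f' * f0 = f'"
  proof -
    have "f' * f0 = f' * (k * f0)" using f'k by (metis mult.assoc)
    then show ?thesis using kf0 f'k by simp
  qed
  have af0: "a * f0 = a"
  proof -
    have "a * f0 = f' * (a * f0)" using r(3) by (metis mult.assoc)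
    also have "\<dots> = (f' * f0) * a" using comm[OF aE f0] by (simp add: mult.assoc)
    finally show ?thesis using f'f0 r(3) by simp
  qed
  have ace: "a * (c * e') = a"
  proof -
    have "a * (c * e') = (a * f0) * (e0 * e')" unfolding c_def using cm by (simp add: mult.assoc)
    then show ?thesis using af0 e0e' r(2) by simp
  qed
  have cea: "c * e' * a = c * e'" using r by (simp add: mult.assoc)
  have cE: "c \<in> idems S0" unfolding c_def using mulE0[OF e0 f0] .
  have cS: "c \<in> S" using E0S[OF cE] .
  have ceE: "c * e' \<in> idems S" using mulE[OF E0E[OF cE] e'E] .
  have aS0: "a \<in> S0" using aE by (simp add: idems_def)
  have ceq: "c = c * e' * a * f'"
  proof -
    have "c * e' * a * f' = c * k" using keq by (simp add: mult.assoc)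
    then show ?thesis using ck by simp
  qed
  have F1: "fact S0 S c (a, c * e', f')"
    unfolding fact_def using aS0 ceE f'E plus_idem[OF aE] star_idem[OF aE] ceq
      greenL_I[OF ES[OF ceE] E0S[OF aE] cea ace] greenR_I[OF ES[OF f'E] E0S[OF aE] r(3) r(4)]
    by simp
  have F2: "fact S0 S c (c, c, c)"
    unfolding fact_def using cE plus_idem[OF cE] star_idem[OF cE] E0E[OF cE] Eid[OF cE] cS
    by (auto simp: idems_def intro!: greenL_I greenR_I)
  have "a = c" "f' = c" using fact_uniq[OF cS F1 F2] by auto
  then have "k * c = k" using keq Eid[OF f'E] by (simp add: mult.assoc)
  then show ?thesis unfolding k_def c_def .
qed


lemma keyR: assumes e0: "e0 \<in> idems S0" and f: "f \<in> idems S" and f0: "f0 \<in> idems S0"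
  and f0f: "f0 * f = f" and ff0: "f * f0 = f0"
  shows "f0 * e0 * (f * e0) = f * e0"
proof -
  define k where "k = f * e0"
  define c where "c = f0 * e0"
  have kE: "k \<in> idems S" unfolding k_def using mulE[OF f E0E[OF e0]] .
  obtain a e' f' where aE: "a \<in> idems S0" and e'E: "e' \<in> idems S" and f'E: "f' \<in> idems S"
    and keq: "k = e' * a * f'" and r: "e' * a = e'" "a * e' = a" "f' * a = a" "a * f' = f'"
    and ke': "k * e' = e'" and f'k: "f' * k = f'"
    using idem_bar[OF kE] by blast
  have ee0: "e0 * e0 = e0" using Eid[OF e0] .
  have cm: "e0 * f0 = f0 * e0" using comm[OF e0 f0] .
  have ke0: "k * e0 = k" unfolding k_def by (simp add: mult.assoc ee0)
  have f0k: "f0 * k = k" unfolding k_def by (simp add: mult.assoc[symmetric] f0f)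
  have kf0: "k * f0 = c"
  proof -
    have "k * f0 = f * (e0 * f0)" unfolding k_def by (simp add: mult.assoc)
    also have "\<dots> = (f * f0) * e0" using cm by (simp add: mult.assoc)
    finally show ?thesis using ff0 c_def by simp
  qed
  have kc: "k * c = c"
  proof -
    have "k * c = (k * f0) * e0" unfolding c_def by (simp add: mult.assoc)
    also have "\<dots> = f0 * (e0 * e0)" using kf0 c_def by (simp add: mult.assoc)
    finally show ?thesis using ee0 c_def by simp
  qed
  have f'e0: "f' * e0 = f'"
  proof -
    have "f' * e0 = f' * (k * e0)" using f'k by (metis mult.assoc)
    then show ?thesis using ke0 f'k by simp
  qed
  have f0e': "f0 * e' = e'"
  proof -
    have "f0 * e' = (f0 * k) * e'" using ke' by (simp add: mult.assoc)
    then show ?thesis using f0k ke' by simp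
  qed
  have f0a: "f0 * a = a"
  proof -
    have "f0 * a = (f0 * a) * e'" using r(2) by (metis mult.assoc)
    also have "\<dots> = a * (f0 * e')" using comm[OF aE f0] by (simp add: mult.assoc[symmetric])
    finally show ?thesis using f0e' r(2) by simp
  qed
  have fca: "f' * c * a = a"
  proof -
    have "f' * c * a = (f' * e0) * (f0 * a)" unfolding c_def using cm by (metis mult.assoc)
    then show ?thesis using f'e0 f0a r(3) by simp
  qed
  have afc: "a * (f' * c) = f' * c" using r by (simp add: mult.assoc[symmetric])
  have cE: "c \<in> idems S0" unfolding c_def using mulE0[OF f0 e0] .
  have cS: "c \<in> S" using E0S[OF cE] .
  have fcE: "f' * c \<in> idems S" using mulE[OF f'E E0E[OF cE]] .
  have aS0: "a \<in> S0" using aE by (simp add: idems_def)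
  have ceq: "c = e' * a * (f' * c)"
  proof -
    have "e' * a * (f' * c) = k * c" using keq by (simp add: mult.assoc)
    then show ?thesis using kc by simp
  qed
  have F1: "fact S0 S c (a, e', f' * c)"
    unfolding fact_def using aS0 e'E fcE plus_idem[OF aE] star_idem[OF aE] ceq
      greenL_I[OF ES[OF e'E] E0S[OF aE] r(1) r(2)] greenR_I[OF ES[OF fcE] E0S[OF aE] fca afc]
    by simp
  have F2: "fact S0 S c (c, c, c)"
    unfolding fact_def using cE plus_idem[OF cE] star_idem[OF cE] E0E[OF cE] Eid[OF cE] cS
    by (auto simp: idems_def intro!: greenL_I greenR_I)
  have "a = c" "e' = c" using fact_uniq[OF cS F1 F2] by auto
  then have "c * k = k" using keq Eid[OF e'E] by (simp add: mult.assoc[symmetric])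
  then show ?thesis unfolding k_def c_def .
qed


lemma L_prod: assumes e: "e \<in> idems S" and e0: "e0 \<in> idems S0" and ee0: "e * e0 = e" and e0e: "e0 * e = e0"
  and f: "f \<in> idems S" and f0: "f0 \<in> idems S0" and ff0: "f * f0 = f" and f0f: "f0 * f = f0"
  shows "e * f * (e0 * f0) = e * f \<and> e0 * f0 * (e * f) = e0 * f0"
proof
  have "e * f * (e0 * f0) = e * (e0 * f * (e0 * f0))" using ee0 by (metis mult.assoc)
  also have "\<dots> = e * (e0 * f)" using keyL[OF e0 f f0 ff0 f0f] by simp
  finally show "e * f * (e0 * f0) = e * f" using ee0 by (metis mult.assoc)
next
  have "e0 * f0 * e = f0 * (e0 * e)" using comm[OF e0 f0] by (metis mult.assoc)
  then have ce: "e0 * f0 * e = e0 * f0" using e0e comm[OF e0 f0] by simp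
  have "e0 * f0 * (e * f) = e0 * (f0 * f)" using ce by (metis mult.assoc)
  then show "e0 * f0 * (e * f) = e0 * f0" using f0f by simp
qed

lemma R_prod: assumes e: "e \<in> idems S" and e0: "e0 \<in> idems S0" and ee0: "e0 * e = e" and e0e: "e * e0 = e0"
  and f: "f \<in> idems S" and f0: "f0 \<in> idems S0" and ff0: "f0 * f = f" and f0f: "f * f0 = f0"
  shows "e0 * f0 * (e * f) = e * f \<and> e * f * (e0 * f0) = e0 * f0"
proof
  have k: "e0 * f0 * (e * f0) = e * f0" using keyR[OF f0 e e0 ee0 e0e] .
  have "e0 * f0 * (e * f) = e0 * f0 * (e * f0) * f" using ff0 by (metis mult.assoc)
  also have "\<dots> = e * f" using k ff0 by (metis mult.assoc)
  finally show "e0 * f0 * (e * f) = e * f" .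
next
  have "e * f * (e0 * f0) = e * f * f0 * e0" using comm[OF e0 f0] by (metis mult.assoc)
  also have "\<dots> = e * e0 * f0" using f0f comm[OF e0 f0] by (metis mult.assoc)
  finally show "e * f * (e0 * f0) = e0 * f0" using e0e by simp
qed

lemma inv_I: assumes x: "x \<in> idems S" and e0: "e0 \<in> idems S0" and xe: "x * e0 = x" and ex: "e0 * x = e0"
  shows "inverses S x \<inter> idems S0 = {e0}"
proof -
  have H: "b = e0" if b: "b \<in> idems S0" and i1: "x * b * x = x" and i2: "b * x * b = b" for b
  proof -
    have 1: "e0 = e0 * b * x" using ex i1 by (metis mult.assoc)
    have "b = b * x * e0 * b" using i2 xe by (metis mult.assoc)
    also have "\<dots> = b * x * b * e0" using comm[OF b e0] by (metis mult.assoc)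
    finally have 2: "b * e0 = b" using i2 by simp
    have 3: "e0 * b = b" using 2 comm[OF b e0] by simp
    have 4: "e0 = b * x" using 1 3 by simp
    have "b * e0 = e0" using 4 Eid[OF b] by (metis mult.assoc)
    then show ?thesis using 2 by simp
  qed
  have I: "e0 \<in> inverses S x"
    unfolding inverses_def using E0S[OF e0] xe ex Eid[OF x] Eid[OF e0] by simp
  show ?thesis
  proof (rule set_eqI)
    fix b show "b \<in> inverses S x \<inter> idems S0 \<longleftrightarrow> b \<in> {e0}"
    proof
      assume "b \<in> inverses S x \<inter> idems S0"
      then have "b = e0" using H unfolding inverses_def by blast
      then show "b \<in> {e0}" by simp
    next
      assume "b \<in> {e0}"
      then show "b \<in> inverses S x \<inter> idems S0" using I e0 by simp
    qed
  qed
qed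

lemma inv_L: assumes x: "x \<in> idems S" and e0: "e0 \<in> idems S0" and xe: "e0 * x = x" and ex: "x * e0 = e0"
  shows "inverses S x \<inter> idems S0 = {e0}"
proof -
  have H: "b = e0" if b: "b \<in> idems S0" and i1: "x * b * x = x" and i2: "b * x * b = b" for b
  proof -
    have 1: "e0 = x * b * e0" using ex i1 by (metis mult.assoc)
    have "b = b * e0 * x * b" using i2 xe by (metis mult.assoc)
    also have "\<dots> = e0 * (b * x * b)" using comm[OF b e0] by (metis mult.assoc)
    finally have 2: "e0 * b = b" using i2 by simp
    have 3: "b * e0 = b" using 2 comm[OF b e0] by simp
    have 4: "e0 = x * b" using 1 3 by (metis mult.assoc)
    have "e0 * b = e0" using 4 Eid[OF b] by (metis mult.assoc)
    then show ?thesis using 2 by simp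
  qed
  have I: "e0 \<in> inverses S x"
    unfolding inverses_def using E0S[OF e0] xe ex Eid[OF x] Eid[OF e0] by simp
  show ?thesis
  proof (rule set_eqI)
    fix b show "b \<in> inverses S x \<inter> idems S0 \<longleftrightarrow> b \<in> {e0}"
    proof
      assume "b \<in> inverses S x \<inter> idems S0"
      then have "b = e0" using H unfolding inverses_def by blast
      then show "b \<in> {e0}" by simp
    next
      assume "b \<in> {e0}"
      then show "b \<in> inverses S x \<inter> idems S0" using I e0 by simp
    qed
  qed
qed

lemma zero_I: assumes x: "x \<in> idems S" and e0: "e0 \<in> idems S0" and xe: "x * e0 = x" and ex: "e0 * x = e0"
  shows "zero_inv S0 S x = e0"
  unfolding zero_inv_def IsetI(2,3)[OF assms]
proof (rule the_equality)
  show "e0 \<in> inverses S x \<and> x * e0 = x \<and> e0 * x = e0" using inv_I[OF assms] xe ex by auto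
next
  fix y assume "y \<in> inverses S x \<and> x * y = x \<and> y * x = e0"
  then have h1: "y * x * y = y" and h2: "x * y = x" and h3: "y * x = e0" unfolding inverses_def by auto
  have "y = y * (x * y)" using h1 by (simp add: mult.assoc)
  also have "\<dots> = e0" using h2 h3 by simp
  finally show "y = e0" .
qed

lemma zero_L: assumes x: "x \<in> idems S" and e0: "e0 \<in> idems S0" and xe: "e0 * x = x" and ex: "x * e0 = e0"
  shows "zero_inv S0 S x = e0"
  unfolding zero_inv_def LamI(2,3)[OF assms]
proof (rule the_equality)
  show "e0 \<in> inverses S x \<and> x * e0 = e0 \<and> e0 * x = x" using inv_L[OF assms] xe ex by auto
next
  fix y assume "y \<in> inverses S x \<and> x * y = e0 \<and> y * x = x"
  then have h1: "y * x * y = y" and h2: "x * y = e0" and h3: "y * x = x" unfolding inverses_def by auto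
  have "y = (y * x) * y" using h1 by simp
  also have "\<dots> = e0" using h2 h3 by simp
  finally show "y = e0" .
qed

end

theorem lemma2p3:
  fixes S S0 :: "'a::semigroup_mult set"
  assumes "closed S" and "quasi_adequate S" and "adequate_transversal S0 S"
  shows "left_regular_band S (Iset S0 S) \<and> right_regular_band S (Lambda S0 S) \<and>
         semilattice_transversal S (idems S0) (Iset S0 S) \<and>
         semilattice_transversal S (idems S0) (Lambda S0 S) \<and>
         (\<forall>x\<in>Iset S0 S \<union> Lambda S0 S. zero_inv S0 S x \<in> inverses S x \<inter> idems S0) \<and>
         (\<forall>x\<in>idems S0. zero_inv S0 S x = x)"
proof -
  interpret AT S S0 using assms by unfold_locales
  have Iprod: "e * f \<in> Iset S0 S" if ha: "e \<in> Iset S0 S" "f \<in> Iset S0 S" for e f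
  proof -
    obtain e0 where "e \<in> idems S" "e0 \<in> idems S0" "e * e0 = e" "e0 * e = e0" using IsetD[OF ha(1)] by blast
    moreover obtain f0 where "f \<in> idems S" "f0 \<in> idems S0" "f * f0 = f" "f0 * f = f0" using IsetD[OF ha(2)] by blast
    ultimately show ?thesis using L_prod IsetI(1) mulE mulE0 by meson
  qed
  have Lprod: "e * f \<in> Lambda S0 S" if ha: "e \<in> Lambda S0 S" "f \<in> Lambda S0 S" for e f
  proof -
    obtain e0 where "e \<in> idems S" "e0 \<in> idems S0" "e0 * e = e" "e * e0 = e0" using LamD[OF ha(1)] by blast
    moreover obtain f0 where "f \<in> idems S" "f0 \<in> idems S0" "f0 * f = f" "f * f0 = f0" using LamD[OF ha(2)] by blast
    ultimately show ?thesis using R_prod LamI(1) mulE mulE0 by meson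
  qed
  have LR: "e * f * e = e * f" if ha: "e \<in> Iset S0 S" "f \<in> Iset S0 S" for e f
  proof -
    obtain e0 where e: "e \<in> idems S" and e0: "e0 \<in> idems S0" and a1: "e * e0 = e" "e0 * e = e0" using IsetD[OF ha(1)] by blast
    obtain f0 where f: "f \<in> idems S" and f0: "f0 \<in> idems S0" and a2: "f * f0 = f" "f0 * f = f0" using IsetD[OF ha(2)] by blast
    define c where "c = e0 * f0"
    have cE: "c \<in> idems S0" using mulE0[OF e0 f0] c_def by simp
    have P1: "e * f * c = e * f" "c * (e * f) = c" using L_prod[OF e e0 a1 f f0 a2] c_def by auto
    have efE: "e * f \<in> idems S" using mulE[OF e f] .
    have P2: "e * f * e * (c * e0) = e * f * e" "c * e0 * (e * f * e) = c * e0"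
      using L_prod[OF efE cE P1 e e0 a1] by auto
    have "c * e0 = c" unfolding c_def using comm[OF e0 f0] Eid[OF e0] by (metis mult.assoc)
    then have P3: "e * f * e * c = e * f * e" using P2 by simp
    have "e * f * e = e * f * e * (c * (e * f))" using P3 P1 by simp
    also have "\<dots> = e * f * e * (e * f)" using P3 by (metis mult.assoc)
    also have "\<dots> = e * f" using Eid[OF e] Eid[OF efE] by (metis mult.assoc)
    finally show ?thesis .
  qed
  have RR: "e * f * e = f * e" if ha: "e \<in> Lambda S0 S" "f \<in> Lambda S0 S" for e f
  proof -
    obtain e0 where e: "e \<in> idems S" and e0: "e0 \<in> idems S0" and a1: "e0 * e = e" "e * e0 = e0" using LamD[OF ha(1)] by blast
    obtain f0 where f: "f \<in> idems S" and f0: "f0 \<in> idems S0" and a2: "f0 * f = f" "f * f0 = f0" using LamD[OF ha(2)] by blast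
    define c where "c = f0 * e0"
    have cE: "c \<in> idems S0" using mulE0[OF f0 e0] c_def by simp
    have P1: "c * (f * e) = f * e" "f * e * c = c" using R_prod[OF f f0 a2 e e0 a1] c_def by auto
    have feE: "f * e \<in> idems S" using mulE[OF f e] .
    have P2: "e0 * c * (e * (f * e)) = e * (f * e)" "e * (f * e) * (e0 * c) = e0 * c"
      using R_prod[OF e e0 a1 feE cE P1] by auto
    have "e0 * c = c" unfolding c_def using comm[OF e0 f0] Eid[OF e0] by (metis mult.assoc)
    then have P3: "e * (f * e) * c = c" using P2 by simp
    have "f * e = (e * (f * e) * c) * (f * e)" using P3 P1 by simp
    also have "\<dots> = e * (f * e) * (f * e)" using P1 by (metis mult.assoc)
    also have "\<dots> = e * f * e" using Eid[OF feE] by (metis mult.assoc)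
    finally show ?thesis by simp
  qed
  have IS: "Iset S0 S \<subseteq> S" using IsetD ES by blast
  have LS: "Lambda S0 S \<subseteq> S" using LamD ES by blast
  have E0I: "idems S0 \<subseteq> Iset S0 S" using IsetI(1) E0E Eid by blast
  have E0L: "idems S0 \<subseteq> Lambda S0 S" using LamI(1) E0E Eid by blast
  have clE0: "closed (idems S0)" using mulE0 unfolding closed_def by blast
  have A1: "left_regular_band S (Iset S0 S)"
    unfolding left_regular_band_def band_def closed_def using IS Iprod LR IsetD Eid by blast
  have A2: "right_regular_band S (Lambda S0 S)"
    unfolding right_regular_band_def band_def closed_def using LS Lprod RR LamD Eid by blast
  have A3: "semilattice_transversal S (idems S0) (Iset S0 S)"
    unfolding semilattice_transversal_def
  proof (intro conjI ballI)
    fix x assume "x \<in> Iset S0 S"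
    then obtain e0 where "x \<in> idems S" "e0 \<in> idems S0" "x * e0 = x" "e0 * x = e0" using IsetD by blast
    then show "card (inverses S x \<inter> idems S0) = 1" using inv_I by simp
  qed (use E0I clE0 comm Eid in auto)
  have A4: "semilattice_transversal S (idems S0) (Lambda S0 S)"
    unfolding semilattice_transversal_def
  proof (intro conjI ballI)
    fix x assume "x \<in> Lambda S0 S"
    then obtain e0 where "x \<in> idems S" "e0 \<in> idems S0" "e0 * x = x" "x * e0 = e0" using LamD by blast
    then show "card (inverses S x \<inter> idems S0) = 1" using inv_L by simp
  qed (use E0L clE0 comm Eid in auto)
  have A5: "\<forall>x\<in>Iset S0 S \<union> Lambda S0 S. zero_inv S0 S x \<in> inverses S x \<inter> idems S0"
  proof
    fix x assume "x \<in> Iset S0 S \<union> Lambda S0 S"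
    then show "zero_inv S0 S x \<in> inverses S x \<inter> idems S0"
    proof
      assume "x \<in> Iset S0 S"
      then obtain e0 where "x \<in> idems S" "e0 \<in> idems S0" "x * e0 = x" "e0 * x = e0" using IsetD by blast
      then show ?thesis using inv_I zero_I by simp
    next
      assume "x \<in> Lambda S0 S"
      then obtain e0 where "x \<in> idems S" "e0 \<in> idems S0" "e0 * x = x" "x * e0 = e0" using LamD by blast
      then show ?thesis using inv_L zero_L by simp
    qed
  qed
  have A6: "\<forall>x\<in>idems S0. zero_inv S0 S x = x"
    using zero_I E0E Eid by blast
  show ?thesis using A1 A2 A3 A4 A5 A6 by blast
qed

end
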